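(* Let $n \ge 3$, let $x_1, \dots, x_n \in \mathbb{R}$ be pairwise distinct, let $h(\theta) = \prod_{j=1}^n (x_j-\theta)$ and $q(\theta) = \theta - n\,h(\theta)/h'(\theta)$. Then $q$ maps the upper half-plane $\{\Im\theta>0\}$ into the lower half-plane $\{\Im\theta<0\}$, and maps the lower half-plane into the upper half-plane. *)

theory Defs
  imports Complex_Main "HOL-Computational_Algebra.Polynomial"
begin

end

theory Submission
  imports Defs
begin

lemma var_id:
  fixes f :: "'a \<Rightarrow> real"
  assumes "finite A"
  shows "(\<Sum>a\<in>A. (real (card A) * f a - sum f A)^2) = real (card A) * (real (card A) * (\<Sum>a\<in>A. (f a)^2) - (sum f A)^2)"
proof -
  have "(\<Sum>a\<in>A. (real (card A) * f a - sum f A)^2) = (\<Sum>a\<in>A. (real (card A))^2 * (f a)^2 - 2 * real (card A) * sum f A * f a + (sum f A)^2)"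
    by (rule sum.cong) (auto simp: power2_eq_square algebra_simps)
  also have "\<dots> = (real (card A))^2 * (\<Sum>a\<in>A. (f a)^2) - 2 * real (card A) * sum f A * sum f A + real (card A) * (sum f A)^2"
    by (simp add: sum.distrib sum_subtractf sum_distrib_left)
  finally show ?thesis by (simp add: power2_eq_square algebra_simps)
qed

lemma core:
  fixes A :: "'a set" and x :: "'a \<Rightarrow> real" and \<theta> :: complex
  assumes fin: "finite A" and inj: "inj_on x A" and a1: "a1 \<in> A" and a2: "a2 \<in> A" and ne: "a1 \<noteq> a2"
    and b: "Im \<theta> \<noteq> 0"
  defines "w \<equiv> (\<lambda>a. 1 / (\<theta> - complex_of_real (x a)))"
  shows "Im (\<theta> - of_nat (card A) / sum w A) * Im \<theta> < 0"
proof -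
  define n where "n = real (card A)"
  define u where "u = (\<lambda>a. Re (w a))"
  define v where "v = (\<lambda>a. Im (w a))"
  define U where "U = sum u A"
  define V where "V = sum v A"
  define T where "T = (\<Sum>a\<in>A. (u a)^2 + (v a)^2)"
  have zne: "\<theta> - complex_of_real (x a) \<noteq> 0" for a
    using b by (metis Im_complex_of_real eq_iff_diff_eq_0)
  have vrel: "v a = - Im \<theta> * ((u a)^2 + (v a)^2)" for a
  proof -
    define p where "p = Re \<theta> - x a"
    have d: "(p)^2 + (Im \<theta>)^2 > 0" using b by (simp add: sum_power2_gt_zero_iff)
    have "u a = p / (p^2 + (Im \<theta>)^2)" "v a = - Im \<theta> / (p^2 + (Im \<theta>)^2)"
      by (simp_all add: u_def v_def w_def p_def Re_divide Im_divide)
    moreover have "(p / (p^2 + (Im \<theta>)^2))^2 + (- Im \<theta> / (p^2 + (Im \<theta>)^2))^2 = 1 / (p^2 + (Im \<theta>)^2)"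
      using d by (simp add: power_divide add_divide_distrib[symmetric] power2_eq_square)
    ultimately show ?thesis by simp
  qed
  have V: "V = - Im \<theta> * T"
  proof -
    have "V = (\<Sum>a\<in>A. - Im \<theta> * ((u a)^2 + (v a)^2))" unfolding V_def
      by (rule sum.cong[OF refl]) (rule vrel)
    then show ?thesis by (simp add: T_def sum_distrib_left)
  qed
  have wne: "w a \<noteq> 0" for a using zne by (simp add: w_def)
  have Tpos: "T > 0"
  proof -
    have "(u a1)^2 + (v a1)^2 > 0" using wne[of a1]
      by (simp add: u_def v_def sum_power2_gt_zero_iff complex_eq_iff)
    moreover have "(u a)^2 + (v a)^2 \<ge> 0" for a by simp
    ultimately show ?thesis unfolding T_def
      using fin a1 by (metis (no_types, lifting) sum_pos2)
  qed
  have n2: "n \<ge> 2"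
  proof -
    have "{a1,a2} \<subseteq> A" using a1 a2 by auto
    then have "card {a1,a2} \<le> card A" using fin by (rule card_mono[rotated])
    then show ?thesis using ne by (simp add: n_def)
  qed
  have strict: "U^2 + V^2 < n * T"
  proof -
    have iu: "n * (n * (\<Sum>a\<in>A. (u a)^2) - U^2) \<ge> 0"
      using var_id[OF fin, of u] unfolding n_def U_def by (metis sum_nonneg zero_le_power2)
    have iv: "n * (n * (\<Sum>a\<in>A. (v a)^2) - V^2) \<ge> 0"
      using var_id[OF fin, of v] unfolding n_def V_def by (metis sum_nonneg zero_le_power2)
    have np: "n > 0" using n2 by simp
    have T2: "T = (\<Sum>a\<in>A. (u a)^2) + (\<Sum>a\<in>A. (v a)^2)" by (simp add: T_def sum.distrib)
    have wd: "w a1 \<noteq> w a2" using inj a1 a2 ne zne unfolding w_def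
      by (auto simp: inj_on_def)
    show ?thesis
    proof (rule ccontr)
      assume "\<not> ?thesis"
      then have eu: "n * (\<Sum>a\<in>A. (u a)^2) - U^2 = 0" and ev: "n * (\<Sum>a\<in>A. (v a)^2) - V^2 = 0"
        using iu iv np T2 by (auto simp: zero_le_mult_iff distrib_left)
      have zu: "(\<Sum>a\<in>A. (n * u a - U)^2) = 0" using var_id[OF fin, of u] eu unfolding n_def U_def by simp
      have zv: "(\<Sum>a\<in>A. (n * v a - V)^2) = 0" using var_id[OF fin, of v] ev unfolding n_def V_def by simp
      have "\<forall>a\<in>A. (n * u a - U)^2 = 0" using zu fin by (simp add: sum_nonneg_eq_0_iff)
      moreover have "\<forall>a\<in>A. (n * v a - V)^2 = 0" using zv fin by (simp add: sum_nonneg_eq_0_iff)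
      ultimately have "n * u a1 = n * u a2" "n * v a1 = n * v a2" using a1 a2 by auto
      then have "u a1 = u a2" "v a1 = v a2" using np by auto
      then show False using wd by (simp add: u_def v_def complex_eq_iff)
    qed
  qed
  have S: "Re (sum w A) = U" "Im (sum w A) = V" by (simp_all add: U_def V_def u_def v_def Re_sum Im_sum)
  have D: "U^2 + V^2 > 0" using V Tpos b by (simp add: sum_power2_gt_zero_iff)
  have "Im (\<theta> - of_nat (card A) / sum w A) = Im \<theta> + n * V / (U^2 + V^2)"
    by (simp add: Im_divide S[symmetric] n_def U_def V_def u_def v_def Re_sum Im_sum)
  also have "\<dots> = Im \<theta> * (U^2 + V^2 - n * T) / (U^2 + V^2)"
    using D V by (simp add: field_simps)
  finally have "Im (\<theta> - of_nat (card A) / sum w A) * Im \<theta> = (Im \<theta>)^2 * (U^2 + V^2 - n * T) / (U^2 + V^2)"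
    by (simp add: power2_eq_square)
  also have "\<dots> < 0" using D strict b
    by (simp add: divide_neg_pos mult_pos_neg)
  finally show ?thesis .
qed

lemma qform:
  fixes n :: nat and x :: "nat \<Rightarrow> real" and \<theta> :: complex
  assumes b: "Im \<theta> \<noteq> 0"
  shows "\<theta> - of_nat n * poly (\<Prod>j=1..n. [:complex_of_real (x j), -1:]) \<theta> / poly (pderiv (\<Prod>j=1..n. [:complex_of_real (x j), -1:])) \<theta>
     = \<theta> - of_nat (card {1..n}) / (\<Sum>a\<in>{1..n}. 1 / (\<theta> - complex_of_real (x a)))"
proof -
  define A where "A = {1..n}"
  define H where "H = (\<Prod>j\<in>A. complex_of_real (x j) - \<theta>)"
  have zne: "complex_of_real (x a) - \<theta> \<noteq> 0" for a
    using b by (metis Im_complex_of_real eq_iff_diff_eq_0)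
  have Hne: "H \<noteq> 0" unfolding H_def using zne by (simp add: prod_zero_iff A_def)
  have ph: "poly (\<Prod>j\<in>A. [:complex_of_real (x j), -1:]) \<theta> = H"
    by (simp add: poly_prod H_def)
  have pd: "poly (pderiv (\<Prod>j\<in>A. [:complex_of_real (x j), -1:])) \<theta> = H * (\<Sum>a\<in>A. 1 / (\<theta> - complex_of_real (x a)))"
  proof -
    have "poly (pderiv (\<Prod>j\<in>A. [:complex_of_real (x j), -1:])) \<theta>
       = (\<Sum>a\<in>A. (\<Prod>j\<in>A - {a}. complex_of_real (x j) - \<theta>) * (-1))"
      by (simp add: pderiv_prod poly_sum poly_prod pderiv_pCons)
    also have "\<dots> = (\<Sum>a\<in>A. H * (1 / (\<theta> - complex_of_real (x a))))"
    proof (rule sum.cong[OF refl])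
      fix a assume a: "a \<in> A"
      have "H = (complex_of_real (x a) - \<theta>) * (\<Prod>j\<in>A - {a}. complex_of_real (x j) - \<theta>)"
        unfolding H_def using a by (simp add: A_def prod.remove)
      then show "(\<Prod>j\<in>A - {a}. complex_of_real (x j) - \<theta>) * (-1) = H * (1 / (\<theta> - complex_of_real (x a)))"
        using zne[of a] by (simp add: field_simps)
    qed
    finally show ?thesis by (simp add: sum_distrib_left)
  qed
  show ?thesis using Hne unfolding A_def[symmetric] ph pd by (simp add: A_def)
qed

theorem mainTheorem8:
  fixes n :: nat and x :: "nat \<Rightarrow> real" and h :: "complex poly" and q :: "complex \<Rightarrow> complex"
  assumes "n \<ge> 3" and "inj_on x {1..n}"
  defines "h \<equiv> \<Prod>j=1..n. [:complex_of_real (x j), -1:]"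
  defines "q \<equiv> (\<lambda>\<theta>. \<theta> - of_nat n * poly h \<theta> / poly (pderiv h) \<theta>)"
  shows "(\<forall>\<theta>. Im \<theta> > 0 \<longrightarrow> Im (q \<theta>) < 0) \<and> (\<forall>\<theta>. Im \<theta> < 0 \<longrightarrow> Im (q \<theta>) > 0)"
proof -
  have key: "Im (q \<theta>) * Im \<theta> < 0" if "Im \<theta> \<noteq> 0" for \<theta>
  proof -
    have "q \<theta> = \<theta> - of_nat (card {1..n}) / (\<Sum>a\<in>{1..n}. 1 / (\<theta> - complex_of_real (x a)))"
      unfolding q_def h_def by (rule qform[OF that])
    moreover have "Im (\<theta> - of_nat (card {1..n}) / (\<Sum>a\<in>{1..n}. 1 / (\<theta> - complex_of_real (x a)))) * Im \<theta> < 0"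
      by (rule core[of "{1..n}" x 1 2]) (use assms(1,2) that in auto)
    ultimately show ?thesis by simp
  qed
  show ?thesis
  proof (intro conjI allI impI)
    fix \<theta> :: complex assume "Im \<theta> > 0"
    with key[of \<theta>] show "Im (q \<theta>) < 0" by (auto simp: mult_less_0_iff)
  next
    fix \<theta> :: complex assume "Im \<theta> < 0"
    with key[of \<theta>] show "Im (q \<theta>) > 0" by (auto simp: mult_less_0_iff)
  qed
qed

end
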